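(* Let $n\geq 2$ be an integer, let $m\neq\pm1$ be a square-free integer, let $\sqrt[n]{m}$ denote a root of $X^n-m$, and let $M=\mathbb{Q}(\sqrt[n]{m})$ with ring of integers $\mathcal{O}_M$. Then $$\frac{n}{\gcd(n,m)}\cdot \mathcal{O}_M\subset \mathbb{Z}[\sqrt[n]{m}].$$ *)

theory Defs
  imports Complex_Main "HOL-Computational_Algebra.Polynomial" "HOL-Computational_Algebra.Squarefree"
begin

definition rat_adjoin :: "complex \<Rightarrow> complex set" where
  "rat_adjoin \<alpha> = {poly (map_poly of_rat p) \<alpha> / poly (map_poly of_rat q) \<alpha> | p q.
       poly (map_poly of_rat q) \<alpha> \<noteq> 0}"

definition ring_of_integers :: "complex \<Rightarrow> complex set" where
  "ring_of_integers \<alpha> = {x \<in> rat_adjoin \<alpha>. algebraic_int x}"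

definition int_adjoin :: "complex \<Rightarrow> complex set" where
  "int_adjoin \<alpha> = {poly (map_poly of_int p) \<alpha> | p. True}"

end

theory Submission
  imports Defs "Berlekamp_Zassenhaus.Factor_Bound" "Jordan_Normal_Form.Char_Poly"
begin

lemma det_trick:
  fixes A :: "int mat" and v :: "complex vec"
  assumes A: "A \<in> carrier_mat k k" and v: "v \<in> carrier_vec k" and nz: "v \<noteq> 0\<^sub>v k"
    and eq: "map_mat of_int A *\<^sub>v v = x \<cdot>\<^sub>v v"
  shows "algebraic_int x"
proof -
  let ?B = "map_mat (of_int :: int \<Rightarrow> complex) A"
  have B: "?B \<in> carrier_mat k k" using A by simp
  have "eigenvector ?B v x" unfolding eigenvector_def using B v nz eq by auto
  hence "eigenvalue ?B x" unfolding eigenvalue_def by blast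
  hence "poly (char_poly ?B) x = 0" using eigenvalue_root_char_poly[OF B] by simp
  moreover have "char_poly ?B = map_poly of_int (char_poly A)" using of_int_hom.char_poly_hom[OF A] by simp
  moreover have "lead_coeff (char_poly A) = 1" using degree_monic_char_poly[OF A] by simp
  ultimately show ?thesis unfolding algebraic_int_altdef_ipoly by metis
qed

definition zspan :: "complex set \<Rightarrow> complex set" where
  "zspan V = {\<Sum>w\<in>V. of_int (c w) * w | c. True}"

lemma zspan_sum_list:
  assumes "distinct ws"
  shows "(\<Sum>w\<in>set ws. f w) = (\<Sum>i<length ws. f (ws ! i))"
  using assms by (simp add: sum.distinct_set_conv_list sum_list_sum_nth atLeast0LessThan)

lemma zspan_eigen:
  assumes fin: "finite V" and one: "1 \<in> V" and cl: "\<And>v. v \<in> V \<Longrightarrow> x * v \<in> zspan V"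
  shows "algebraic_int x"
proof -
  obtain ws where ws: "distinct ws" "set ws = V" using finite_distinct_list[OF fin] by blast
  define k where "k = length ws"
  have "\<forall>i. \<exists>c. i < k \<longrightarrow> x * ws ! i = (\<Sum>w\<in>V. of_int (c w) * w)"
  proof
    fix i show "\<exists>c. i < k \<longrightarrow> x * ws ! i = (\<Sum>w\<in>V. of_int (c w) * w)"
    proof (cases "i < k")
      case True
      hence "ws ! i \<in> V" using ws k_def by auto
      from cl[OF this] show ?thesis unfolding zspan_def by auto
    qed auto
  qed
  then obtain C where C: "\<And>i. i < k \<Longrightarrow> x * ws ! i = (\<Sum>w\<in>V. of_int (C i w) * w)"
    by metis
  define A :: "int mat" where "A = mat k k (\<lambda>(i,j). C i (ws ! j))"
  define v :: "complex vec" where "v = vec k (\<lambda>i. ws ! i)"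
  have A: "A \<in> carrier_mat k k" unfolding A_def by simp
  have v: "v \<in> carrier_vec k" unfolding v_def by simp
  have nz: "v \<noteq> 0\<^sub>v k"
  proof
    assume "v = 0\<^sub>v k"
    obtain i where i: "i < k" "ws ! i = 1" using one ws k_def by (metis in_set_conv_nth)
    have "v $ i = 1" using i unfolding v_def by simp
    with \<open>v = 0\<^sub>v k\<close> i show False by simp
  qed
  have eq: "map_mat of_int A *\<^sub>v v = x \<cdot>\<^sub>v v"
  proof (rule eq_vecI)
    fix i assume "i < dim_vec (x \<cdot>\<^sub>v v)"
    hence i: "i < k" using v by simp
    have "(map_mat of_int A *\<^sub>v v) $ i = (\<Sum>j<k. of_int (C i (ws ! j)) * ws ! j)"
      using i A unfolding v_def A_def
      by (simp add: scalar_prod_def atLeast0LessThan)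
    also have "\<dots> = (\<Sum>w\<in>V. of_int (C i w) * w)"
      using zspan_sum_list[OF ws(1), of "\<lambda>w. of_int (C i w) * w"] ws k_def by simp
    also have "\<dots> = x * ws ! i" using C[OF i] by simp
    also have "\<dots> = (x \<cdot>\<^sub>v v) $ i" using i unfolding v_def by simp
    finally show "(map_mat of_int A *\<^sub>v v) $ i = (x \<cdot>\<^sub>v v) $ i" .
  qed (use A v in simp)
  show ?thesis by (rule det_trick[OF A v nz eq])
qed

lemma zspanI: "a = (\<Sum>w\<in>V. of_int (c w) * w) \<Longrightarrow> a \<in> zspan V"
  unfolding zspan_def by blast

lemma zspan_add: assumes "a \<in> zspan V" "b \<in> zspan V" shows "a + b \<in> zspan V"
proof -
  from assms obtain c d where "a = (\<Sum>w\<in>V. of_int (c w) * w)" "b = (\<Sum>w\<in>V. of_int (d w) * w)"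
    unfolding zspan_def by auto
  hence "a + b = (\<Sum>w\<in>V. of_int (c w + d w) * w)" by (simp add: sum.distrib distrib_right)
  thus ?thesis by (rule zspanI)
qed

lemma zspan_0: "0 \<in> zspan V"
proof -
  have "0 = (\<Sum>w\<in>V. of_int ((\<lambda>_. 0::int) w) * w)" by simp
  thus ?thesis by (rule zspanI)
qed

lemma zspan_smult: assumes "a \<in> zspan V" shows "of_int k * a \<in> zspan V"
proof -
  from assms obtain c where "a = (\<Sum>w\<in>V. of_int (c w) * w)" unfolding zspan_def by auto
  hence "of_int k * a = (\<Sum>w\<in>V. of_int (k * c w) * w)" by (simp add: sum_distrib_left mult.assoc)
  thus ?thesis by (rule zspanI)
qed

lemma zspan_sum: assumes "\<And>i. i \<in> I \<Longrightarrow> f i \<in> zspan V" shows "sum f I \<in> zspan V"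
  using assms
proof (induction I rule: infinite_finite_induct)
  case (infinite A) thus ?case using zspan_0 by simp
next
  case empty thus ?case using zspan_0 by simp
next
  case (insert x F) thus ?case using zspan_add by simp
qed

lemma zspan_base: assumes "finite V" "v \<in> V" shows "v \<in> zspan V"
proof -
  have "(\<Sum>w\<in>V. of_int (if w = v then 1 else 0) * w) = v"
  proof -
    have "(\<Sum>w\<in>V. of_int (if w = v then 1 else 0) * w) = (\<Sum>w\<in>V. if w = v then v else 0)"
      by (rule sum.cong) auto
    also have "\<dots> = v" using assms by simp
    finally show ?thesis .
  qed
  thus ?thesis by (intro zspanI[where c="\<lambda>w. if w = v then 1 else 0"]) simp
qed

lemma zspan_mult_closed:
  assumes "finite V" "\<And>v. v \<in> V \<Longrightarrow> x * v \<in> zspan V" "a \<in> zspan V"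
  shows "x * a \<in> zspan V"
proof -
  from assms obtain c where a: "a = (\<Sum>w\<in>V. of_int (c w) * w)" unfolding zspan_def by auto
  have "x * a = (\<Sum>w\<in>V. of_int (c w) * (x * w))" unfolding a by (simp add: sum_distrib_left mult_ac)
  also have "\<dots> \<in> zspan V" by (intro zspan_sum zspan_smult assms(2))
  finally show ?thesis .
qed

lemma zspan_times:
  assumes fin: "finite V" "finite W" and a: "a \<in> zspan V" and b: "b \<in> zspan W"
  shows "a * b \<in> zspan ((\<lambda>(v,w). v * w) ` (V \<times> W))"
proof -
  from a obtain c where a: "a = (\<Sum>v\<in>V. of_int (c v) * v)" unfolding zspan_def by auto
  from b obtain d where b: "b = (\<Sum>w\<in>W. of_int (d w) * w)" unfolding zspan_def by auto
  have "a * b = (\<Sum>v\<in>V. \<Sum>w\<in>W. (of_int (c v) * v) * (of_int (d w) * w))"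
    unfolding a b by (rule sum_product)
  also have "\<dots> = (\<Sum>v\<in>V. \<Sum>w\<in>W. of_int (c v * d w) * (v * w))"
    by (simp add: mult_ac)
  also have "\<dots> \<in> zspan ((\<lambda>(v,w). v * w) ` (V \<times> W))"
    using fin by (intro zspan_sum zspan_smult zspan_base) auto
  finally show ?thesis .
qed



lemma algebraic_int_powers:
  fixes x :: complex
  assumes "algebraic_int x"
  obtains a where "a > 0" "\<And>k. x ^ k \<in> zspan ((\<lambda>i. x ^ i) ` {..<a})"
proof -
  from assms obtain p where p: "poly (map_poly of_int p) x = 0" "lead_coeff p = (1::int)"
    unfolding algebraic_int_altdef_ipoly by auto
  define a where "a = degree p"
  define X where "X = (\<lambda>i. x ^ i) ` {..<a}"
  have "a > 0"
  proof (rule ccontr)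
    assume "\<not> a > 0"
    hence "degree p = 0" using a_def by simp
    then obtain c where "p = [:c:]" by (rule degree_eq_zeroE)
    thus False using p by simp
  qed
  have finX: "finite X" unfolding X_def by simp
  have step: "x * v \<in> zspan X" if "v \<in> X" for v
  proof -
    from that obtain i where i: "i < a" "v = x ^ i" unfolding X_def by auto
    show ?thesis
    proof (cases "i + 1 < a")
      case True
      hence "x * v \<in> X" using i unfolding X_def by (auto intro!: image_eqI[of _ _ "i+1"])
      thus ?thesis using zspan_base[OF finX] by blast
    next
      case False
      hence ia: "i + 1 = a" using i by simp
      have "0 = (\<Sum>j\<le>a. of_int (poly.coeff p j) * x ^ j)"
        using p(1) by (simp add: poly_altdef a_def coeff_map_poly degree_map_poly)
      also have "\<dots> = (\<Sum>j<a. of_int (poly.coeff p j) * x ^ j) + x ^ a"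
        using p(2) by (simp add: lessThan_Suc_atMost[symmetric] a_def)
      finally have "x ^ a = (\<Sum>j<a. of_int (- poly.coeff p j) * x ^ j)"
        by (simp add: sum_negf eq_neg_iff_add_eq_0 add.commute)
      also have "\<dots> \<in> zspan X"
        by (intro zspan_sum zspan_smult zspan_base[OF finX]) (auto simp: X_def)
      finally show ?thesis using i ia by (simp add: power_Suc[symmetric] del: power_Suc)
    qed
  qed
  have "x ^ k \<in> zspan X" for k
  proof (induction k)
    case 0
    have "(1::complex) \<in> X" using \<open>a > 0\<close> unfolding X_def by (auto intro!: image_eqI[of _ _ 0])
    thus ?case using zspan_base[OF finX] by simp
  next
    case (Suc k)
    thus ?case using zspan_mult_closed[OF finX step] by simp
  qed
  thus ?thesis using that \<open>a > 0\<close> X_def by blast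
qed

lemma algebraic_int_plus_times:
  fixes x y :: complex
  assumes "algebraic_int x" "algebraic_int y"
  shows "algebraic_int (x + y) \<and> algebraic_int (x * y)"
proof -
  obtain a where a: "a > 0" "\<And>k. x ^ k \<in> zspan ((\<lambda>i. x ^ i) ` {..<a})"
    using algebraic_int_powers[OF assms(1)] by blast
  obtain b where b: "b > 0" "\<And>k. y ^ k \<in> zspan ((\<lambda>i. y ^ i) ` {..<b})"
    using algebraic_int_powers[OF assms(2)] by blast
  define X where "X = (\<lambda>i. x ^ i) ` {..<a}"
  define Y where "Y = (\<lambda>i. y ^ i) ` {..<b}"
  define V where "V = (\<lambda>(v,w). v * w) ` (X \<times> Y)"
  have fin: "finite X" "finite Y" "finite V" unfolding X_def Y_def V_def by auto
  have pw: "x ^ i * y ^ j \<in> zspan V" for i j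
    using zspan_times[OF fin(1,2) a(2)[of i, folded X_def] b(2)[of j, folded Y_def]] unfolding V_def .
  have "1 \<in> X" using a unfolding X_def by (intro image_eqI[of 1 _ 0]) auto
  moreover have "1 \<in> Y" using b unfolding Y_def by (intro image_eqI[of 1 _ 0]) auto
  ultimately have "(1,1) \<in> X \<times> Y" by simp
  hence one: "1 \<in> V" unfolding V_def by (intro image_eqI[of 1 _ "(1,1)"]) auto
  have V: "v \<in> V \<Longrightarrow> \<exists>i j. v = x ^ i * y ^ j" for v unfolding V_def X_def Y_def by force
  have sx: "x * v \<in> zspan V" if vV: "v \<in> V" for v
  proof -
    obtain i j where "v = x ^ i * y ^ j" using V[OF vV] by blast
    hence "x * v = x ^ (Suc i) * y ^ j" by simp
    with pw[of "Suc i" j] show ?thesis by metis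
  qed
  have sy: "y * v \<in> zspan V" if vV: "v \<in> V" for v
  proof -
    obtain i j where "v = x ^ i * y ^ j" using V[OF vV] by blast
    hence "y * v = x ^ i * y ^ (Suc j)" by simp
    with pw[of i "Suc j"] show ?thesis by metis
  qed
  have "algebraic_int (x + y)"
    by (rule zspan_eigen[OF fin(3) one]) (simp add: distrib_right zspan_add sx sy)
  moreover have "algebraic_int (x * y)"
  proof (rule zspan_eigen[OF fin(3) one])
    fix v assume "v \<in> V"
    have "x * y * v = x * (y * v)" by simp
    thus "x * y * v \<in> zspan V" using zspan_mult_closed[OF fin(3) sx sy[OF \<open>v \<in> V\<close>]] by (simp only: mult.assoc)
  qed
  ultimately show ?thesis by blast
qed

lemma algebraic_int_plus [intro]: "algebraic_int (x::complex) \<Longrightarrow> algebraic_int y \<Longrightarrow> algebraic_int (x + y)"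
  using algebraic_int_plus_times by blast
lemma algebraic_int_times [intro]: "algebraic_int (x::complex) \<Longrightarrow> algebraic_int y \<Longrightarrow> algebraic_int (x * y)"
  using algebraic_int_plus_times by blast
lemma algebraic_int_diff [intro]: "algebraic_int (x::complex) \<Longrightarrow> algebraic_int y \<Longrightarrow> algebraic_int (x - y)"
  using algebraic_int_plus[of x "-y"] by auto
lemma algebraic_int_power [intro]: "algebraic_int (x::complex) \<Longrightarrow> algebraic_int (x ^ k)"
  by (induction k) auto
lemma algebraic_int_sum [intro]: "(\<And>i. i \<in> I \<Longrightarrow> algebraic_int (f i :: complex)) \<Longrightarrow> algebraic_int (sum f I)"
  by (induction I rule: infinite_finite_induct) auto

definition PZ :: "nat \<Rightarrow> int \<Rightarrow> int poly" where
  "PZ n m = Polynomial.monom 1 n + [:-m:]"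

lemma coeff_PZ: "poly.coeff (PZ n m) i = (if i = n then 1 else 0) + (if i = 0 then -m else 0)"
  by (simp add: PZ_def coeff_monom coeff_pCons split: nat.splits)

lemma degree_PZ: assumes "n \<ge> 1" shows "degree (PZ n m) = n"
proof -
  have "degree [:-m:] < degree (Polynomial.monom (1::int) n)" using assms by (simp add: degree_monom_eq)
  thus ?thesis unfolding PZ_def by (simp add: degree_add_eq_left degree_monom_eq)
qed

lemma eis_core:
  fixes g h :: "int poly"
  assumes gh: "g * h = PZ n m" and n: "n \<ge> 1" and pr: "prime p"
    and pg: "p dvd poly.coeff g 0" and ph: "\<not> p dvd poly.coeff h 0" and dg: "degree g < n"
  shows False
proof -
  have "lead_coeff (g * h) = 1" using gh degree_PZ[OF n] coeff_PZ[of n m n] n by simp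
  hence lc: "lead_coeff g * lead_coeff h = 1" by (simp add: lead_coeff_mult)
  have ex: "\<not> p dvd poly.coeff g (degree g)"
  proof
    assume "p dvd poly.coeff g (degree g)"
    hence "p dvd 1" using lc by (metis dvd_mult2)
    thus False using pr not_prime_unit by blast
  qed
  define i where "i = (LEAST i. \<not> p dvd poly.coeff g i)"
  have i1: "\<not> p dvd poly.coeff g i" unfolding i_def by (rule LeastI[of _ "degree g"]) (rule ex)
  have i2: "i \<le> degree g" unfolding i_def by (rule Least_le) (rule ex)
  have i3: "p dvd poly.coeff g k" if "k < i" for k using not_less_Least[of k] that unfolding i_def by blast
  have i0: "i \<noteq> 0"
  proof
    assume "i = 0" thus False using pg i1 by simp
  qed
  have "poly.coeff (g * h) i = (\<Sum>k\<le>i. poly.coeff g k * poly.coeff h (i - k))" by (rule coeff_mult)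
  also have "\<dots> = (\<Sum>k<i. poly.coeff g k * poly.coeff h (i - k)) + poly.coeff g i * poly.coeff h 0"
    by (simp add: lessThan_Suc_atMost[symmetric])
  finally have eq: "poly.coeff (g * h) i = (\<Sum>k<i. poly.coeff g k * poly.coeff h (i - k)) + poly.coeff g i * poly.coeff h 0" .
  have S: "p dvd (\<Sum>k<i. poly.coeff g k * poly.coeff h (i - k))" by (rule dvd_sum) (simp add: i3)
  have "poly.coeff (g * h) i = 0" using gh coeff_PZ[of n m i] i0 i2 dg by simp
  hence "p dvd poly.coeff g i * poly.coeff h 0" using eq S by (metis dvd_0_right dvd_add_right_iff)
  thus False using pr i1 ph by (simp add: prime_dvd_mult_iff)
qed

lemma PZ_irreducible:
  assumes n: "n \<ge> 1" and pr: "prime p" and pm: "p dvd m" and psq: "\<not> p^2 dvd m"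
  shows "irreducible\<^sub>d (PZ n m)"
proof (rule irreducible\<^sub>dI)
  show "degree (PZ n m) > 0" using degree_PZ[OF n] n by simp
  fix q r :: "int poly"
  assume dq: "degree q > 0" "degree q < degree (PZ n m)" and dr: "degree r > 0" "degree r < degree (PZ n m)"
    and qr: "PZ n m = q * r"
  have "poly.coeff q 0 * poly.coeff r 0 = - m"
    using arg_cong[OF qr, of "\<lambda>f. poly.coeff f 0"] coeff_PZ[of n m 0] n by (simp add: coeff_mult_0)
  hence "p dvd poly.coeff q 0 * poly.coeff r 0" using pm by simp
  hence d: "p dvd poly.coeff q 0 \<or> p dvd poly.coeff r 0" using pr by (simp add: prime_dvd_mult_iff)
  have nd: "\<not> (p dvd poly.coeff q 0 \<and> p dvd poly.coeff r 0)"
  proof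
    assume "p dvd poly.coeff q 0 \<and> p dvd poly.coeff r 0"
    hence "p * p dvd poly.coeff q 0 * poly.coeff r 0" by (simp add: mult_dvd_mono)
    hence "p^2 dvd m" using \<open>poly.coeff q 0 * poly.coeff r 0 = - m\<close> by (simp add: power2_eq_square)
    thus False using psq by simp
  qed
  have dqr: "degree q < n" "degree r < n" using dq dr degree_PZ[OF n] by auto
  show False
  proof (cases "p dvd poly.coeff q 0")
    case True
    thus False using eis_core[of q r n m p] qr n pr nd dqr by auto
  next
    case False
    thus False using eis_core[of r q n m p] qr n pr d dqr by (auto simp: mult.commute)
  qed
qed

definition PQ :: "nat \<Rightarrow> int \<Rightarrow> rat poly" where "PQ n m = map_poly rat_of_int (PZ n m)"

interpretation of_rat_poly_hom: map_poly_comm_ring_hom "of_rat :: rat \<Rightarrow> complex" ..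

lemma ev_mult: "poly (map_poly (of_rat :: rat \<Rightarrow> complex) (a * b)) x = poly (map_poly of_rat a) x * poly (map_poly of_rat b) x"
  by (simp add: of_rat_poly_hom.hom_mult)
lemma ev_add: "poly (map_poly (of_rat :: rat \<Rightarrow> complex) (a + b)) x = poly (map_poly of_rat a) x + poly (map_poly of_rat b) x"
  by (simp add: of_rat_hom.map_poly_hom_add)
lemma ev_smult: "poly (map_poly (of_rat :: rat \<Rightarrow> complex) (Polynomial.smult c a)) x = of_rat c * poly (map_poly of_rat a) x"
  by (simp add: of_rat_hom.map_poly_hom_smult)
lemma ev_const: "poly (map_poly (of_rat :: rat \<Rightarrow> complex) [:c:]) x = of_rat c"
  by (simp add: of_rat_hom.map_poly_pCons_hom)

lemma ev_PQ: "poly (map_poly (of_rat :: rat \<Rightarrow> complex) (PQ n m)) x = x ^ n - of_int m"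
proof -
  have "map_poly (of_rat :: rat \<Rightarrow> complex) (PQ n m) = map_poly of_int (PZ n m)"
    unfolding PQ_def by (simp add: map_poly_map_poly o_def)
  also have "\<dots> = Polynomial.monom 1 n + [:- of_int m:]" unfolding PZ_def
    by (simp add: of_int_hom.map_poly_hom_add of_int_hom.map_poly_pCons_hom)
  finally show ?thesis by (simp add: poly_monom)
qed

lemma degree_PQ: "n \<ge> 1 \<Longrightarrow> degree (PQ n m) = n"
  unfolding PQ_def using degree_PZ by simp

context
  fixes n :: nat and m :: int and \<alpha> :: complex
  assumes n1: "n \<ge> 1" and irr: "irreducible\<^sub>d (PQ n m)" and \<alpha>: "\<alpha> ^ n = of_int m"
begin

lemma PQ_nz: "PQ n m \<noteq> 0"
proof
  assume "PQ n m = 0"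
  hence "degree (PQ n m) = 0" by simp
  thus False using degree_PQ[OF n1, of m] n1 by simp
qed

lemma PQ_gcd_cases: "PQ n m dvd q \<or> degree (gcd (PQ n m) q) = 0"
proof (rule disjCI)
  assume dg: "degree (gcd (PQ n m) q) \<noteq> 0"
  define g where "g = gcd (PQ n m) q"
  obtain h where h: "PQ n m = g * h" using gcd_dvd1[of "PQ n m" q] unfolding g_def by (rule dvdE)
  have g0: "g \<noteq> 0" "h \<noteq> 0" using h PQ_nz by auto
  have dsum: "degree (PQ n m) = degree g + degree h" using h g0 by (simp add: degree_mult_eq)
  have "degree h = 0"
  proof (rule ccontr)
    assume "degree h \<noteq> 0"
    hence "degree g < degree (PQ n m)" "degree h < degree (PQ n m)" using dsum dg g_def by auto
    thus False using irreducible\<^sub>dD(2)[OF irr] h by blast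
  qed
  then obtain c where c: "h = [:c:]" by (rule degree_eq_zeroE)
  with g0 have c0: "c \<noteq> 0" by auto
  have "PQ n m * [:inverse c:] = g * ([:c:] * [:inverse c:])" by (simp add: h c mult.assoc)
  also have "[:c:] * [:inverse c:] = (1 :: rat poly)" using c0 by (simp add: pCons_one)
  finally have "g = PQ n m * [:inverse c:]" by simp
  hence "PQ n m dvd g" by (rule dvdI)
  thus "PQ n m dvd q" using gcd_dvd2[of "PQ n m" q] g_def dvd_trans by blast
qed

lemma ev_PQ_zero:
  assumes "\<beta> ^ n = of_int m" "PQ n m dvd q"
  shows "poly (map_poly (of_rat :: rat \<Rightarrow> complex) q) \<beta> = 0"
proof -
  from assms(2) obtain r where "q = PQ n m * r" by (rule dvdE)
  thus ?thesis using assms(1) by (simp add: ev_mult ev_PQ)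
qed

lemma PQ_dvd:
  assumes q: "poly (map_poly (of_rat :: rat \<Rightarrow> complex) q) \<alpha> = 0"
  shows "PQ n m dvd q"
proof -
  have F0: False if d0: "degree (gcd (PQ n m) q) = 0"
  proof -
    define g where "g = gcd (PQ n m) q"
    from d0 have "degree g = 0" by (simp add: g_def)
    then obtain c where c: "g = [:c:]" by (rule degree_eq_zeroE)
    have "g \<noteq> 0" using PQ_nz g_def by simp
    hence c0: "c \<noteq> 0" using c by simp
    have bz: "fst (bezout_coefficients (PQ n m) q) * PQ n m + snd (bezout_coefficients (PQ n m) q) * q = [:c:]"
      using bezout_coefficients_fst_snd[of "PQ n m" q] g_def c by simp
    have "poly (map_poly (of_rat :: rat \<Rightarrow> complex) [:c:]) \<alpha> = 0"
      unfolding bz[symmetric] by (simp only: ev_add ev_mult ev_PQ \<alpha> q) simp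
    thus False using c0 by (simp only: ev_const) simp
  qed
  from PQ_gcd_cases[of q] show ?thesis
  proof
    assume "PQ n m dvd q" thus ?thesis .
  next
    assume "degree (gcd (PQ n m) q) = 0" from F0[OF this] show ?thesis ..
  qed
qed

lemma conj_zero:
  fixes \<beta> :: complex
  shows "\<beta> ^ n = of_int m \<Longrightarrow> poly (map_poly (of_rat :: rat \<Rightarrow> complex) q) \<alpha> = 0 \<Longrightarrow> poly (map_poly of_rat q) \<beta> = 0"
  by (rule ev_PQ_zero, assumption, rule PQ_dvd)

lemma conj_int:
  fixes \<beta> :: complex
  assumes \<beta>: "\<beta> ^ n = of_int m" and ai: "algebraic_int (poly (map_poly (of_rat :: rat \<Rightarrow> complex) f) \<alpha>)"
  shows "algebraic_int (poly (map_poly (of_rat :: rat \<Rightarrow> complex) f) \<beta>)"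
proof -
  from ai obtain h :: "int poly" where h: "poly (map_poly of_int h) (poly (map_poly (of_rat :: rat \<Rightarrow> complex) f) \<alpha>) = 0" "lead_coeff h = 1"
    unfolding algebraic_int_altdef_ipoly by blast
  define H :: "rat poly" where "H = pcompose (map_poly of_int h) f"
  have mH: "map_poly (of_rat::rat\<Rightarrow>complex) H = pcompose (map_poly of_int h) (map_poly of_rat f)"
    unfolding H_def by (simp add: of_rat_hom.map_poly_pcompose map_poly_map_poly o_def)
  have "poly (map_poly (of_rat :: rat \<Rightarrow> complex) H) \<alpha> = 0" using h(1) by (simp add: mH poly_pcompose)
  hence "poly (map_poly (of_rat :: rat \<Rightarrow> complex) H) \<beta> = 0" by (rule conj_zero[OF \<beta>])
  hence "poly (map_poly of_int h) (poly (map_poly (of_rat :: rat \<Rightarrow> complex) f) \<beta>) = 0" by (simp add: mH poly_pcompose)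
  thus ?thesis using h(2) unfolding algebraic_int_altdef_ipoly by blast
qed

lemma rep:
  assumes "x \<in> rat_adjoin \<alpha>"
  shows "\<exists>f. degree f < n \<and> x = poly (map_poly of_rat f) \<alpha>"
proof -
  from assms obtain a b where x: "x = poly (map_poly of_rat a) \<alpha> / poly (map_poly of_rat b) \<alpha>"
    and b: "poly (map_poly of_rat b) \<alpha> \<noteq> 0"
    unfolding rat_adjoin_def by blast
  have nd: "\<not> PQ n m dvd b"
  proof
    assume "PQ n m dvd b" from ev_PQ_zero[OF \<alpha> this] b show False by simp
  qed
  have d0: "degree (gcd (PQ n m) b) = 0"
  proof (rule disjE[OF PQ_gcd_cases[of b]])
    assume "PQ n m dvd b" thus ?thesis using nd by contradiction
  qed
  define g where "g = gcd (PQ n m) b"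
  from d0 have "degree g = 0" by (simp add: g_def)
  then obtain c where c: "g = [:c:]" by (rule degree_eq_zeroE)
  have "g \<noteq> 0" using PQ_nz g_def by simp
  hence c0: "c \<noteq> 0" using c by simp
  define s where "s = fst (bezout_coefficients (PQ n m) b)"
  define t where "t = snd (bezout_coefficients (PQ n m) b)"
  have bz: "s * PQ n m + t * b = [:c:]"
    using bezout_coefficients_fst_snd[of "PQ n m" b] s_def t_def g_def c by simp
  have tb: "poly (map_poly of_rat t) \<alpha> * poly (map_poly of_rat b) \<alpha> = (of_rat c :: complex)"
    using arg_cong[OF bz, of "\<lambda>q. poly (map_poly (of_rat :: rat \<Rightarrow> complex) q) \<alpha>"]
    by (simp only: ev_add ev_mult ev_PQ \<alpha> ev_const) simp
  define r where "r = a * Polynomial.smult (inverse c) t"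
  define F where "F = r mod PQ n m"
  have "x = poly (map_poly of_rat r) \<alpha>"
  proof -
    have "poly (map_poly of_rat r) \<alpha> = poly (map_poly of_rat a) \<alpha> * (of_rat (inverse c) * poly (map_poly of_rat t) \<alpha>)"
      unfolding r_def by (simp only: ev_mult ev_smult)
    also have "of_rat (inverse c) * poly (map_poly of_rat t) \<alpha> = 1 / poly (map_poly of_rat b) \<alpha>"
      using tb b c0 by (simp add: field_simps of_rat_inverse of_rat_divide)
    finally show ?thesis using x by simp
  qed
  also have "poly (map_poly of_rat r) \<alpha> = poly (map_poly of_rat F) \<alpha>"
  proof -
    have "poly (map_poly (of_rat :: rat \<Rightarrow> complex) (r div PQ n m * PQ n m + F)) \<alpha> = poly (map_poly of_rat F) \<alpha>"
      by (simp only: ev_add ev_mult ev_PQ \<alpha>) simp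
    moreover have "r div PQ n m * PQ n m + F = r" unfolding F_def by (rule div_mult_mod_eq)
    ultimately show ?thesis by simp
  qed
  finally have xF: "x = poly (map_poly of_rat F) \<alpha>" .
  have "degree F < n"
    using degree_mod_less[OF PQ_nz, of r] degree_PQ[OF n1, of m] n1 unfolding F_def by auto
  thus ?thesis using xF by blast
qed

end

definition zeta :: "nat \<Rightarrow> complex" where "zeta n = cis (2 * pi / real n)"

lemma zeta_pow: "zeta n ^ k = cis (2 * pi * real k / real n)"
  unfolding zeta_def DeMoivre by (rule arg_cong[where f = cis]) simp

lemma zeta_n: "n \<ge> 1 \<Longrightarrow> zeta n ^ n = 1"
  unfolding zeta_pow by simp

lemma zeta_pow_eq_1:
  assumes n: "n \<ge> 1" and z: "zeta n ^ e = 1"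
  shows "n dvd e"
proof -
  have "cos (2 * pi * real e / real n) = 1" using z unfolding zeta_pow
    by (metis cis.sel(1) one_complex.sel(1))
  then obtain k :: int where k: "2 * pi * real e / real n = of_int k * 2 * pi"
    using cos_one_2pi_int by blast
  hence "real e = of_int k * real n" using n by (simp add: field_simps)
  hence "int e = k * int n" by (metis of_int_eq_iff of_int_mult of_int_of_nat_eq)
  hence "int n dvd int e" by simp
  thus ?thesis by simp
qed

lemma root_sum:
  assumes n: "n \<ge> 1"
  shows "(\<Sum>j<n. (zeta n ^ e) ^ j) = (if n dvd e then of_nat n else 0)"
proof (cases "n dvd e")
  case True
  then obtain q where "e = n * q" by (rule dvdE)
  hence "zeta n ^ e = 1" using zeta_n[OF n] by (simp add: power_mult)
  thus ?thesis using True by simp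
next
  case False
  hence ne: "zeta n ^ e \<noteq> 1" using zeta_pow_eq_1[OF n] by blast
  have "(zeta n ^ e) ^ n = 1" using zeta_n[OF n]
    by (metis mult.commute power_mult power_one)
  thus ?thesis using False geometric_sum[OF ne, of n] by simp
qed

lemma dvd_shift_iff:
  fixes i i0 n :: nat
  assumes "i < n" "i0 < n"
  shows "n dvd (i + n - i0) \<longleftrightarrow> i = i0"
proof
  assume "n dvd (i + n - i0)"
  then obtain q where q: "i + n - i0 = n * q" by (rule dvdE)
  show "i = i0"
  proof (cases "q = 0")
    case True thus ?thesis using q assms by simp
  next
    case False
    show ?thesis
    proof (cases "q = 1")
      case True thus ?thesis using q assms by simp
    next
      case False
      hence "q \<ge> 2" using \<open>q \<noteq> 0\<close> by simp
      hence "n * 2 \<le> n * q" by (rule mult_le_mono2)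
      hence "2 * n \<le> i + n - i0" using q by (metis mult.commute)
      thus ?thesis using assms by arith
    qed
  qed
qed simp

lemma poly_sum_lt:
  fixes f :: "complex poly"
  assumes "degree f < n"
  shows "poly f z = (\<Sum>i<n. poly.coeff f i * z ^ i)"
proof -
  have "poly f z = (\<Sum>i\<le>degree f. poly.coeff f i * z ^ i)" by (simp add: poly_altdef)
  also have "\<dots> = (\<Sum>i<n. poly.coeff f i * z ^ i)"
    by (rule sum.mono_neutral_left) (use assms in \<open>auto simp: coeff_eq_0\<close>)
  finally show ?thesis .
qed

lemma ev_sum:
  assumes "degree f < n"
  shows "poly (map_poly (of_rat :: rat \<Rightarrow> complex) f) z = (\<Sum>i<n. of_rat (poly.coeff f i) * z ^ i)"
  using poly_sum_lt[of "map_poly (of_rat :: rat \<Rightarrow> complex) f" n z] assms by simp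

lemma trace_formula:
  assumes n1: "n \<ge> 1" and df: "degree f < n" and i0: "i0 < n"
  shows "(\<Sum>j<n. poly (map_poly (of_rat :: rat \<Rightarrow> complex) f) (zeta n ^ j * \<alpha>) * (zeta n ^ j * \<alpha>) ^ (n - i0))
         = of_nat n * of_rat (poly.coeff f i0) * \<alpha> ^ n"
proof -
  define c where "c i = (of_rat (poly.coeff f i) :: complex)" for i
  have "(\<Sum>j<n. poly (map_poly (of_rat :: rat \<Rightarrow> complex) f) (zeta n ^ j * \<alpha>) * (zeta n ^ j * \<alpha>) ^ (n - i0))
      = (\<Sum>j<n. \<Sum>i<n. c i * \<alpha> ^ (i + (n - i0)) * (zeta n ^ (i + (n - i0))) ^ j)"
  proof (rule sum.cong[OF refl])
    fix j
    have "poly (map_poly (of_rat :: rat \<Rightarrow> complex) f) (zeta n ^ j * \<alpha>) * (zeta n ^ j * \<alpha>) ^ (n - i0)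
        = (\<Sum>i<n. c i * (zeta n ^ j * \<alpha>) ^ i) * (zeta n ^ j * \<alpha>) ^ (n - i0)"
      unfolding ev_sum[OF df] c_def ..
    also have "\<dots> = (\<Sum>i<n. c i * (zeta n ^ j * \<alpha>) ^ (i + (n - i0)))"
      by (simp add: sum_distrib_right power_add mult.assoc)
    also have "\<dots> = (\<Sum>i<n. c i * \<alpha> ^ (i + (n - i0)) * (zeta n ^ (i + (n - i0))) ^ j)"
      by (rule sum.cong[OF refl]) (simp add: power_mult_distrib mult_ac flip: power_mult)
    finally show "poly (map_poly (of_rat :: rat \<Rightarrow> complex) f) (zeta n ^ j * \<alpha>) * (zeta n ^ j * \<alpha>) ^ (n - i0)
        = (\<Sum>i<n. c i * \<alpha> ^ (i + (n - i0)) * (zeta n ^ (i + (n - i0))) ^ j)" .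
  qed
  also have "\<dots> = (\<Sum>i<n. c i * \<alpha> ^ (i + (n - i0)) * (\<Sum>j<n. (zeta n ^ (i + (n - i0))) ^ j))"
    by (subst sum.swap) (simp add: sum_distrib_left)
  also have "\<dots> = (\<Sum>i<n. if i = i0 then c i0 * \<alpha> ^ n * of_nat n else 0)"
  proof (rule sum.cong[OF refl])
    fix i assume "i \<in> {..<n}"
    hence "n dvd (i + (n - i0)) \<longleftrightarrow> i = i0" using dvd_shift_iff[of i n i0] i0 by simp
    thus "c i * \<alpha> ^ (i + (n - i0)) * (\<Sum>j<n. (zeta n ^ (i + (n - i0))) ^ j) = (if i = i0 then c i0 * \<alpha> ^ n * of_nat n else 0)"
      unfolding root_sum[OF n1] using i0 by auto
  qed
  also have "\<dots> = c i0 * \<alpha> ^ n * of_nat n" using i0 by simp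
  finally show ?thesis unfolding c_def by (simp add: mult_ac)
qed

lemma PZ_root: "poly (map_poly (of_int :: int \<Rightarrow> complex) (PZ n m)) x = x ^ n - of_int m"
proof -
  have "map_poly (of_int :: int \<Rightarrow> complex) (PZ n m) = Polynomial.monom 1 n + [:- of_int m:]"
    unfolding PZ_def by (simp add: of_int_hom.map_poly_hom_add of_int_hom.map_poly_pCons_hom)
  thus ?thesis by (simp add: poly_monom)
qed

lemma root_algebraic_int:
  assumes "n \<ge> 1" "(x :: complex) ^ n = of_int m"
  shows "algebraic_int x"
proof -
  have "lead_coeff (PZ n m) = 1" using degree_PZ[OF assms(1)] coeff_PZ[of n m n] assms(1) by simp
  moreover have "poly (map_poly of_int (PZ n m)) x = 0" using assms(2) PZ_root by simp
  ultimately show ?thesis unfolding algebraic_int_altdef_ipoly by blast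
qed

lemma trace_int:
  assumes n1: "n \<ge> 1" and irr: "irreducible\<^sub>d (PQ n m)" and \<alpha>: "\<alpha> ^ n = of_int m"
    and df: "degree f < n" and i0: "i0 < n"
    and ai: "algebraic_int (poly (map_poly (of_rat :: rat \<Rightarrow> complex) f) \<alpha>)"
  shows "of_nat n * of_int m * poly.coeff f i0 \<in> (\<int> :: rat set)"
proof -
  have \<beta>: "(zeta n ^ j * \<alpha>) ^ n = of_int m" for j
  proof -
    have "(zeta n ^ j) ^ n = (zeta n ^ n) ^ j" by (simp only: power_mult[symmetric] mult.commute)
    hence "(zeta n ^ j) ^ n = 1" using zeta_n[OF n1] by simp
    thus ?thesis by (simp add: power_mult_distrib \<alpha>)
  qed
  have "algebraic_int (\<Sum>j<n. poly (map_poly (of_rat :: rat \<Rightarrow> complex) f) (zeta n ^ j * \<alpha>) * (zeta n ^ j * \<alpha>) ^ (n - i0))"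
    using conj_int[OF n1 irr \<alpha> \<beta> ai] root_algebraic_int[OF n1 \<beta>] by blast
  hence "algebraic_int (of_rat (of_nat n * of_int m * poly.coeff f i0) :: complex)"
    unfolding trace_formula[OF n1 df i0] \<alpha> by (simp add: of_rat_mult mult_ac)
  hence "(of_rat (of_nat n * of_int m * poly.coeff f i0) :: complex) \<in> \<int>"
    by (intro rational_algebraic_int_is_int) auto
  then obtain k where "(of_rat (of_nat n * of_int m * poly.coeff f i0) :: complex) = of_int k"
    by (auto elim: Ints_cases)
  hence "of_nat n * of_int m * poly.coeff f i0 = (of_int k :: rat)"
    by (metis of_rat_eq_iff of_rat_of_int_eq)
  thus ?thesis by simp
qed

lemma sum_split_at:
  fixes g :: "nat \<Rightarrow> complex"
  assumes "j < n"
  shows "(\<Sum>i<n. g i) = (\<Sum>i<j. g i) + g j + (\<Sum>i\<in>{j<..<n}. g i)"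
proof -
  have "{..<n} = {..<j} \<union> {j} \<union> {j<..<n}" using assms by auto
  moreover have "(\<Sum>i\<in>{..<j} \<union> {j} \<union> {j<..<n}. g i) = (\<Sum>i<j. g i) + g j + (\<Sum>i\<in>{j<..<n}. g i)"
    by (subst sum.union_disjoint; auto)+
  ultimately show ?thesis by simp
qed

lemma eis_local:
  fixes \<alpha> :: complex and a :: "nat \<Rightarrow> int"
  assumes n1: "n \<ge> 1" and \<alpha>: "\<alpha> ^ n = of_int m"
    and pr: "prime p" and pm: "p dvd m" and psq: "\<not> p^2 dvd m"
    and K: "\<not> p dvd K"
    and ai: "algebraic_int ((\<Sum>i<n. of_int (a i) * \<alpha> ^ i) / of_int (p * K))"
  shows "\<forall>i<n. p dvd a i"
proof (rule ccontr)
  assume "\<not> (\<forall>i<n. p dvd a i)"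
  hence ex: "\<exists>i. i < n \<and> \<not> p dvd a i" by blast
  define j where "j = (LEAST i. i < n \<and> \<not> p dvd a i)"
  have j: "j < n" "\<not> p dvd a j" using LeastI_ex[OF ex] unfolding j_def by auto
  have jl: "p dvd a i" if "i < j" for i
    using not_less_Least[of i "\<lambda>i. i < n \<and> \<not> p dvd a i"] that j(1) unfolding j_def by auto
  have p0: "p \<noteq> 0" using pr by auto
  have K0: "K \<noteq> 0" using K by auto
  have aint: "algebraic_int \<alpha>" by (rule root_algebraic_int[OF n1 \<alpha>])
  obtain u where u: "m = p * u" using pm by (rule dvdE)
  have pu: "\<not> p dvd u"
  proof
    assume "p dvd u"
    hence "p * p dvd m" using u by simp
    thus False using psq by (simp add: power2_eq_square)
  qed
  define S where "S = (\<Sum>i<n. of_int (a i) * \<alpha> ^ i)"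
  have y: "algebraic_int (S / of_int p)"
  proof -
    have eq: "S / of_int p = of_int K * (S / of_int (p * K))" using K0 p0 by (simp add: field_simps)
    have "algebraic_int (of_int K * (S / of_int (p * K)))"
      using ai unfolding S_def by (intro algebraic_int_times algebraic_int_of_int)
    thus ?thesis unfolding eq .
  qed
  have lowint: "algebraic_int ((\<Sum>i<j. of_int (a i) * \<alpha> ^ i) / of_int p)"
  proof -
    have "(\<Sum>i<j. of_int (a i) * \<alpha> ^ i) / of_int p = (\<Sum>i<j. of_int (a i div p) * \<alpha> ^ i)"
      unfolding sum_divide_distrib
    proof (rule sum.cong[OF refl])
      fix i assume "i \<in> {..<j}"
      hence "a i = p * (a i div p)" using jl by simp
      hence "(of_int (a i) :: complex) = of_int p * of_int (a i div p)" by (metis of_int_mult)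
      thus "of_int (a i) * \<alpha> ^ i / of_int p = of_int (a i div p) * \<alpha> ^ i" using p0 by simp
    qed
    thus ?thesis using aint by auto
  qed
  define T where "T = (\<Sum>i\<in>{j<..<n}. of_int (a i) * \<alpha> ^ i)"
  have ST: "S = (\<Sum>i<j. of_int (a i) * \<alpha> ^ i) + of_int (a j) * \<alpha> ^ j + T"
    unfolding S_def T_def by (rule sum_split_at[OF j(1)])
  have y1: "algebraic_int ((of_int (a j) * \<alpha> ^ j + T) / of_int p)"
  proof -
    have "S / of_int p - (\<Sum>i<j. of_int (a i) * \<alpha> ^ i) / of_int p = (S - (\<Sum>i<j. of_int (a i) * \<alpha> ^ i)) / of_int p"
      by (rule diff_divide_distrib[symmetric])
    also have "S - (\<Sum>i<j. of_int (a i) * \<alpha> ^ i) = of_int (a j) * \<alpha> ^ j + T" unfolding ST by simp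
    finally have "(of_int (a j) * \<alpha> ^ j + T) / of_int p = S / of_int p - (\<Sum>i<j. of_int (a i) * \<alpha> ^ i) / of_int p" by simp
    thus ?thesis using y lowint by auto
  qed
  have Tint: "algebraic_int (T * \<alpha> ^ (n - 1 - j) / of_int p)"
  proof -
    have "T * \<alpha> ^ (n - 1 - j) / of_int p = (\<Sum>i\<in>{j<..<n}. of_int (a i * u) * \<alpha> ^ (i - 1 - j))"
      unfolding T_def sum_distrib_right sum_divide_distrib
    proof (rule sum.cong[OF refl])
      fix i assume "i \<in> {j<..<n}"
      hence "i + (n - 1 - j) = n + (i - 1 - j)" using j by auto
      hence "\<alpha> ^ i * \<alpha> ^ (n - 1 - j) = of_int m * \<alpha> ^ (i - 1 - j)"
        by (metis \<alpha> power_add)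
      thus "of_int (a i) * \<alpha> ^ i * \<alpha> ^ (n - 1 - j) / of_int p = of_int (a i * u) * \<alpha> ^ (i - 1 - j)"
        using p0 u by (simp add: field_simps)
    qed
    thus ?thesis using aint by auto
  qed
  define z where "z = of_int (a j) * \<alpha> ^ (n - 1) / of_int p"
  have zint: "algebraic_int z"
  proof -
    have "z = (of_int (a j) * \<alpha> ^ j + T) / of_int p * \<alpha> ^ (n - 1 - j) - T * \<alpha> ^ (n - 1 - j) / of_int p"
    proof -
      have "\<alpha> ^ j * \<alpha> ^ (n - 1 - j) = \<alpha> ^ (n - 1)" using j by (simp flip: power_add)
      thus ?thesis unfolding z_def using p0 by (simp add: field_simps)
    qed
    moreover have "algebraic_int ((of_int (a j) * \<alpha> ^ j + T) / of_int p * \<alpha> ^ (n - 1 - j) - T * \<alpha> ^ (n - 1 - j) / of_int p)"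
      using y1 Tint aint by (intro algebraic_int_diff algebraic_int_times algebraic_int_power)
    ultimately show ?thesis by (simp only:)
  qed
  have zn: "z ^ n = of_int (a j ^ n * m ^ (n - 1)) / of_int (p ^ n)"
  proof -
    have "(\<alpha> ^ (n - 1)) ^ n = (\<alpha> ^ n) ^ (n - 1)" by (simp flip: power_mult add: mult.commute)
    thus ?thesis unfolding z_def using \<alpha> by (simp add: power_divide power_mult_distrib)
  qed
  hence "z ^ n \<in> \<rat>" by simp
  hence "z ^ n \<in> \<int>" using zint by (intro rational_algebraic_int_is_int) auto
  then obtain N where N: "z ^ n = of_int N" by (auto elim: Ints_cases)
  have "(of_int (a j ^ n * m ^ (n - 1)) :: complex) = of_int (p ^ n * N)"
    using N zn p0 by (simp add: field_simps)
  hence eqi: "a j ^ n * m ^ (n - 1) = p ^ n * N" by (simp only: of_int_eq_iff)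
  have A: "a j ^ n * m ^ (n - 1) = p ^ (n - 1) * (a j ^ n * u ^ (n - 1))" using u by (simp add: power_mult_distrib)
  have B: "p ^ n * N = p ^ (n - 1) * (p * N)" using n1
    by (metis (no_types, lifting) Suc_diff_le diff_Suc_1 mult.assoc mult.commute power_Suc)
  have "p ^ (n - 1) * (a j ^ n * u ^ (n - 1)) = p ^ (n - 1) * (p * N)" using A B eqi by argo
  hence "a j ^ n * u ^ (n - 1) = p * N" using p0 by simp
  hence "p dvd a j ^ n * u ^ (n - 1)" by simp
  hence "p dvd a j ^ n \<or> p dvd u ^ (n - 1)" using pr by (simp add: prime_dvd_mult_iff)
  hence "p dvd a j \<or> p dvd u" using pr prime_dvd_power by blast
  thus False using j(2) pu by blast
qed

lemma eis_iter:
  fixes \<alpha> :: complex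
  assumes n1: "n \<ge> 1" and \<alpha>: "\<alpha> ^ n = of_int m"
    and pr: "prime p" and pm: "p dvd m" and psq: "\<not> p^2 dvd m"
  shows "\<forall>a K. \<not> p dvd K \<longrightarrow> algebraic_int ((\<Sum>i<n. of_int (a i) * \<alpha> ^ i) / of_int (p ^ s * K))
           \<longrightarrow> (\<forall>i<n. p ^ s dvd a i)"
proof (induction s)
  case 0 thus ?case by simp
next
  case (Suc s)
  show ?case
  proof (intro allI impI)
    fix a :: "nat \<Rightarrow> int" and K i
    assume K: "\<not> p dvd K" and ai: "algebraic_int ((\<Sum>i<n. of_int (a i) * \<alpha> ^ i) / of_int (p ^ Suc s * K))"
      and i: "i < n"
    have p0: "p \<noteq> 0" using pr by auto
    have "(\<Sum>i<n. of_int (a i) * \<alpha> ^ i) / of_int (p * K) = of_int (p ^ s) * ((\<Sum>i<n. of_int (a i) * \<alpha> ^ i) / of_int (p ^ Suc s * K))"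
      using p0 K by (auto simp: field_simps)
    moreover have "algebraic_int (of_int (p ^ s) * ((\<Sum>i<n. of_int (a i) * \<alpha> ^ i) / of_int (p ^ Suc s * K)))"
      using ai by (intro algebraic_int_times algebraic_int_of_int)
    ultimately have "algebraic_int ((\<Sum>i<n. of_int (a i) * \<alpha> ^ i) / of_int (p * K))" by (simp only:)
    hence dv: "\<forall>i<n. p dvd a i" by (rule eis_local[OF n1 \<alpha> pr pm psq K])
    define a' where "a' i = a i div p" for i
    have aa: "a i = p * a' i" if "i < n" for i using dv that unfolding a'_def by simp
    have "(\<Sum>i<n. of_int (a i) * \<alpha> ^ i) / of_int (p ^ Suc s * K) = (\<Sum>i<n. of_int (a' i) * \<alpha> ^ i) / of_int (p ^ s * K)"
    proof -
      have "(\<Sum>i<n. of_int (a i) * \<alpha> ^ i) = of_int p * (\<Sum>i<n. of_int (a' i) * \<alpha> ^ i)"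
        unfolding sum_distrib_left by (rule sum.cong[OF refl]) (simp add: aa)
      thus ?thesis using p0 K by (auto simp: field_simps)
    qed
    hence "algebraic_int ((\<Sum>i<n. of_int (a' i) * \<alpha> ^ i) / of_int (p ^ s * K))" using ai by simp
    hence "p ^ s dvd a' i" using Suc.IH K i by blast
    thus "p ^ Suc s dvd a i" using aa[OF i] by (simp add: mult_dvd_mono)
  qed
qed

lemma int_poly_sum:
  "\<exists>P :: int poly. poly (map_poly (of_int :: int \<Rightarrow> complex) P) z = (\<Sum>i<k. of_int (b i) * z ^ i)"
proof (induction k)
  case 0 show ?case by (intro exI[of _ 0]) simp
next
  case (Suc k)
  then obtain P where P: "poly (map_poly (of_int :: int \<Rightarrow> complex) P) z = (\<Sum>i<k. of_int (b i) * z ^ i)" by blast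
  have "poly (map_poly (of_int :: int \<Rightarrow> complex) (P + Polynomial.monom (b k) k)) z = (\<Sum>i<Suc k. of_int (b i) * z ^ i)"
    using P by (simp add: of_int_hom.map_poly_hom_add poly_monom)
  thus ?case by blast
qed

theorem theorem2p3:
  fixes n :: nat and m :: int and \<alpha> :: complex
  assumes "n \<ge> 2" and "squarefree m" and "m \<noteq> 1" and "m \<noteq> -1"
    and "\<alpha> ^ n = of_int m"
  shows "(\<lambda>x. of_int (int n div gcd (int n) m) * x) ` ring_of_integers \<alpha> \<subseteq> int_adjoin \<alpha>"
proof
  fix y assume "y \<in> (\<lambda>x. of_int (int n div gcd (int n) m) * x) ` ring_of_integers \<alpha>"
  then obtain x where y: "y = of_int (int n div gcd (int n) m) * x" and x: "x \<in> ring_of_integers \<alpha>"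
    by blast
  from x have xr: "x \<in> rat_adjoin \<alpha>" and xa: "algebraic_int x" unfolding ring_of_integers_def by auto
  have n1: "n \<ge> 1" using assms(1) by simp
  have \<alpha>: "\<alpha> ^ n = of_int m" by (rule assms(5))
  have m0: "m \<noteq> 0" using assms(2) by auto
  have nu: "\<not> is_unit m"
  proof
    assume "is_unit m"
    hence "\<bar>m\<bar> = 1" by simp
    thus False using assms(3,4) by arith
  qed
  obtain p0 where p0: "p0 dvd m" "prime p0" using prime_divisor_exists[OF m0 nu] by blast
  have sqf: "\<not> p ^ 2 dvd m" if "prime p" for p
  proof
    assume "p ^ 2 dvd m"
    hence "p dvd 1" using squarefreeD[OF assms(2)] by blast
    thus False using that not_prime_unit by blast
  qed
  have irr: "irreducible\<^sub>d (PQ n m)"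
    unfolding PQ_def by (rule irreducible\<^sub>d_int_rat[OF PZ_irreducible[OF n1 p0(2) p0(1) sqf[OF p0(2)]]])
  obtain f where df: "degree f < n" and xf: "x = poly (map_poly of_rat f) \<alpha>"
    using rep[OF n1 irr \<alpha> xr] by blast
  have tr: "of_nat n * of_int m * poly.coeff f i \<in> (\<int> :: rat set)" if "i < n" for i
    using trace_int[OF n1 irr \<alpha> df that] xa xf by simp
  define a where "a i = \<lfloor>of_nat n * of_int m * poly.coeff f i\<rfloor>" for i
  have a: "(of_int (a i) :: rat) = of_nat n * of_int m * poly.coeff f i" if "i < n" for i
    using tr[OF that] unfolding a_def by (auto elim: Ints_cases)
  define D where "D = int n * m"
  have D0: "D \<noteq> 0" using n1 m0 D_def by simp
  have cf: "(of_rat (poly.coeff f i) :: complex) = of_int (a i) / of_int D" if "i < n" for i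
  proof -
    have "poly.coeff f i = of_int (a i) / of_int D" using a[OF that] D0 unfolding D_def
      by (simp add: field_simps)
    hence "(of_rat (poly.coeff f i) :: complex) = of_rat (of_int (a i) / of_int D)" by simp
    thus ?thesis by (simp add: of_rat_divide)
  qed
  have xsum: "x = (\<Sum>i<n. of_int (a i) * \<alpha> ^ i) / of_int D"
  proof -
    have "x = (\<Sum>i<n. of_rat (poly.coeff f i) * \<alpha> ^ i)" using xf ev_sum[OF df] by simp
    also have "\<dots> = (\<Sum>i<n. of_int (a i) * \<alpha> ^ i / of_int D)"
      by (rule sum.cong[OF refl]) (simp add: cf)
    also have "\<dots> = (\<Sum>i<n. of_int (a i) * \<alpha> ^ i) / of_int D" by (simp add: sum_divide_distrib)
    finally show ?thesis .
  qed
  have loc: "p ^ multiplicity p D dvd a i" if pp: "prime p" "p dvd m" and i: "i < n" for p i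
  proof -
    define s where "s = multiplicity p D"
    have nup: "\<not> is_unit p" using pp(1) not_prime_unit by blast
    obtain K where K: "D = p ^ s * K" "\<not> p dvd K" using multiplicity_decompose'[OF D0 nup] unfolding s_def by blast
    have "algebraic_int ((\<Sum>i<n. of_int (a i) * \<alpha> ^ i) / of_int (p ^ s * K))"
      using xa xsum K(1) by simp
    thus ?thesis using eis_iter[OF n1 \<alpha> pp(1) pp(2) sqf[OF pp(1)], of s] K(2) i s_def by blast
  qed
  define g where "g = gcd (int n) m"
  have g0: "g \<noteq> 0" using m0 g_def by simp
  have gdm: "g dvd m" unfolding g_def by simp
  have gdn: "g dvd int n" unfolding g_def by simp
  have gm: "g * m dvd a i" if i: "i < n" for i
  proof (cases "a i = 0")
    case True thus ?thesis by simp
  next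
    case False
    have gm0: "g * m \<noteq> 0" using m0 g0 by simp
    show ?thesis
    proof (rule multiplicity_le_imp_dvd[OF gm0])
      fix q :: int assume q: "prime q"
      show "multiplicity q (g * m) \<le> multiplicity q (a i)"
      proof (cases "q dvd m")
        case False
        have "\<not> q dvd g * m"
        proof
          assume "q dvd g * m"
          hence "q dvd g \<or> q dvd m" using q by (simp add: prime_dvd_mult_iff)
          thus False using False gdm dvd_trans by blast
        qed
        hence "multiplicity q (g * m) = 0" by (rule not_dvd_imp_multiplicity_0)
        thus ?thesis by simp
      next
        case True
        have "multiplicity q (g * m) = multiplicity q g + multiplicity q m"
          by (rule prime_elem_multiplicity_mult_distrib[OF prime_imp_prime_elem[OF q] g0 m0])
        also have "multiplicity q g \<le> multiplicity q (int n)"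
          using dvd_imp_multiplicity_le[OF gdn] n1 by simp
        hence "multiplicity q g + multiplicity q m \<le> multiplicity q (int n) + multiplicity q m" by simp
        also have "multiplicity q (int n) + multiplicity q m = multiplicity q D"
          unfolding D_def using prime_elem_multiplicity_mult_distrib[OF prime_imp_prime_elem[OF q] _ m0, of "int n"] n1 by simp
        also have "multiplicity q D \<le> multiplicity q (a i)"
        proof -
          have "\<not> is_unit q" using q not_prime_unit by blast
          thus ?thesis using multiplicity_geI[OF False _ loc[OF q True i]] by blast
        qed
        finally show ?thesis .
      qed
    qed
  qed
  define N where "N = int n div g"
  have nN: "int n = N * g" unfolding N_def using gdn by simp
  define b where "b i = a i div (g * m)" for i
  have ab: "a i = b i * (g * m)" if "i < n" for i unfolding b_def using gm[OF that] by simp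
  have N0: "N \<noteq> 0" using nN n1 by auto
  have "y = (\<Sum>i<n. of_int (b i) * \<alpha> ^ i)"
  proof -
    have "(\<Sum>i<n. of_int (a i) * \<alpha> ^ i) = of_int (g * m) * (\<Sum>i<n. of_int (b i) * \<alpha> ^ i)"
      unfolding sum_distrib_left by (rule sum.cong[OF refl]) (simp add: ab)
    moreover have "D = N * (g * m)" unfolding D_def nN by simp
    ultimately have "x = (\<Sum>i<n. of_int (b i) * \<alpha> ^ i) / of_int N"
      using xsum g0 m0 N0 by (simp add: field_simps)
    thus ?thesis using y N0 unfolding N_def g_def by simp
  qed
  moreover obtain P :: "int poly" where "poly (map_poly of_int P) \<alpha> = (\<Sum>i<n. of_int (b i) * \<alpha> ^ i)"
    using int_poly_sum by blast
  ultimately have "y = poly (map_poly of_int P) \<alpha>" by simp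
  thus "y \<in> int_adjoin \<alpha>" unfolding int_adjoin_def by blast
qed

end
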